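(* Each of the logics $\mathbf T$, $\mathbf{KTB}$, $\mathbf{S4}$, $\mathbf{S5}$, $\mathbf{S4.2}$, $\mathbf{S4.3}$ has the strong boxdot property. That is, for each such logic $L_0$ and every normal modal logic $L$, if $\mathrm{BD}(L)\subseteq L_0$ then $L\subseteq L_0$. In particular (the boxdot conjecture), for every normal modal logic $L$: if $\mathrm{BD}(L)=\mathbf T$ then $L\subseteq\mathbf T$.
   Context: Modal formulas are built from propositional variables with Boolean connectives and a single modality $\Box$, with $\Diamond=\neg\Box\neg$. A normal modal logic (nml) contains all tautologies and $\Box(p\to q)\to(\Box p\to\Box q)$, and is closed under modus ponens, necessitation and substitution. $\mathbf K$ is the least nml, and $L\oplus\alpha$ denotes the least nml containing $L\cup\{\alpha\}$. The logics are: - $\mathbf T=\mathbf K\oplus(\Box p\to p)$; - $\mathbf{KTB}=\mathbf T\oplus(p\to\Box\Diamond p)$; - $\mathbf{S4}=\mathbf T\oplus(\Box p\to\Box\Box p)$; - $\mathbf{S5}=\mathbf{S4}\oplus(p\to\Box\Diamond p)$; - $\mathbf{S4.2}=\mathbf{S4}\oplus(\Diamond\Box p\to\Box\Diamond p)$; - $\mathbf{S4.3}=\mathbf{S4}\oplus(\Box(\Box p\to q)\vee\Box(\Box q\to p))$. The boxdot translation $\varphi\mapsto\varphi^{\boxdot}$ fixes propositional variables, commutes with Boolean connectives, and satisfies $(\Box\varphi)^{\boxdot}=\varphi^{\boxdot}\wedge\Box\varphi^{\boxdot}$. For an nml $L$, $\mathrm{BD}(L)=\{\varphi:\varphi^{\boxdot}\in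 L\}$. *)

theory Defs
  imports Main
begin

datatype fm = Var nat | Bot | Imp fm fm | Box fm

definition Neg :: "fm \<Rightarrow> fm" where "Neg a = Imp a Bot"
definition Top :: fm where "Top = Neg Bot"
definition Or :: "fm \<Rightarrow> fm \<Rightarrow> fm" where "Or a b = Imp (Neg a) b"
definition And :: "fm \<Rightarrow> fm \<Rightarrow> fm" where "And a b = Neg (Imp a (Neg b))"
definition Dia :: "fm \<Rightarrow> fm" where "Dia a = Neg (Box (Neg a))"

fun peval :: "(fm \<Rightarrow> bool) \<Rightarrow> fm \<Rightarrow> bool" where
  "peval v (Var n) = v (Var n)"
| "peval v Bot = False"
| "peval v (Imp a b) = (peval v a \<longrightarrow> peval v b)"
| "peval v (Box a) = v (Box a)"

definition tautology :: "fm \<Rightarrow> bool" where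
  "tautology a \<longleftrightarrow> (\<forall>v. peval v a)"

fun subst :: "(nat \<Rightarrow> fm) \<Rightarrow> fm \<Rightarrow> fm" where
  "subst s (Var n) = s n"
| "subst s Bot = Bot"
| "subst s (Imp a b) = Imp (subst s a) (subst s b)"
| "subst s (Box a) = Box (subst s a)"

abbreviation p :: fm where "p \<equiv> Var 0"
abbreviation q :: fm where "q \<equiv> Var 1"

definition nml :: "fm set \<Rightarrow> bool" where
  "nml L \<longleftrightarrow>
     {a. tautology a} \<subseteq> L
   \<and> Imp (Box (Imp p q)) (Imp (Box p) (Box q)) \<in> L
   \<and> (\<forall>a b. a \<in> L \<longrightarrow> Imp a b \<in> L \<longrightarrow> b \<in> L)
   \<and> (\<forall>a. a \<in> L \<longrightarrow> Box a \<in> L)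
   \<and> (\<forall>a s. a \<in> L \<longrightarrow> subst s a \<in> L)"

definition K :: "fm set" where
  "K = \<Inter> {M. nml M}"

definition ext :: "fm set \<Rightarrow> fm \<Rightarrow> fm set" (infixl "\<oplus>" 65) where
  "L \<oplus> \<alpha> = \<Inter> {M. nml M \<and> L \<subseteq> M \<and> \<alpha> \<in> M}"

definition T :: "fm set" where "T = K \<oplus> Imp (Box p) p"
definition KTB :: "fm set" where "KTB = T \<oplus> Imp p (Box (Dia p))"
definition S4 :: "fm set" where "S4 = T \<oplus> Imp (Box p) (Box (Box p))"
definition S5 :: "fm set" where "S5 = S4 \<oplus> Imp p (Box (Dia p))"
definition S4_2 :: "fm set" where "S4_2 = S4 \<oplus> Imp (Dia (Box p)) (Box (Dia p))"
definition S4_3 :: "fm set" where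
  "S4_3 = S4 \<oplus> Or (Box (Imp (Box p) q)) (Box (Imp (Box q) p))"

fun bdot :: "fm \<Rightarrow> fm" where
  "bdot (Var n) = Var n"
| "bdot Bot = Bot"
| "bdot (Imp a b) = Imp (bdot a) (bdot b)"
| "bdot (Box a) = And (bdot a) (Box (bdot a))"

definition BD :: "fm set \<Rightarrow> fm set" where
  "BD L = {a. bdot a \<in> L}"

definition strong_boxdot :: "fm set \<Rightarrow> bool" where
  "strong_boxdot L0 \<longleftrightarrow> (\<forall>L. nml L \<longrightarrow> BD L \<subseteq> L0 \<longrightarrow> L \<subseteq> L0)"

end

theory Submission
  imports Defs
begin

lemma peval_Neg[simp]: "peval v (Neg a) = (\<not> peval v a)" by (simp add: Neg_def)
lemma peval_Top[simp]: "peval v Top" by (simp add: Top_def)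
lemma peval_And[simp]: "peval v (And a b) = (peval v a \<and> peval v b)" by (simp add: And_def)
lemma peval_Or[simp]: "peval v (Or a b) = (peval v a \<or> peval v b)" by (auto simp add: Or_def)
lemma peval_Dia[simp]: "peval v (Dia a) = (\<not> v (Box (Neg a)))" by (simp add: Dia_def)
lemma peval_foldr[simp]: "peval v (foldr Imp xs c) = ((\<forall>x\<in>set xs. peval v x) \<longrightarrow> peval v c)"
  by (induction xs) auto

lemma bdot_Neg[simp]: "bdot (Neg a) = Neg (bdot a)" by (simp add: Neg_def)
lemma bdot_Top[simp]: "bdot Top = Top" by (simp add: Top_def)
lemma bdot_And[simp]: "bdot (And a b) = And (bdot a) (bdot b)" by (simp add: And_def)
lemma bdot_Dia[simp]: "bdot (Dia a) = Neg (And (Neg (bdot a)) (Box (Neg (bdot a))))" by (simp add: Dia_def)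

section \<open>Syntactic reasoning in an nml\<close>

lemma nml_taut: "nml L \<Longrightarrow> tautology a \<Longrightarrow> a \<in> L" unfolding nml_def by blast
lemma nml_mp: "nml L \<Longrightarrow> a \<in> L \<Longrightarrow> Imp a b \<in> L \<Longrightarrow> b \<in> L" unfolding nml_def by blast
lemma nml_nec: "nml L \<Longrightarrow> a \<in> L \<Longrightarrow> Box a \<in> L" unfolding nml_def by blast
lemma nml_subst: "nml L \<Longrightarrow> a \<in> L \<Longrightarrow> subst s a \<in> L" unfolding nml_def by blast
lemma nml_K: assumes "nml L" shows "Imp (Box (Imp a b)) (Imp (Box a) (Box b)) \<in> L"
proof -
  have "Imp (Box (Imp p q)) (Imp (Box p) (Box q)) \<in> L" using assms unfolding nml_def by blast
  from nml_subst[OF assms this, of "\<lambda>n. if n = 0 then a else b"] show ?thesis by simp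
qed

lemma nml_foldr_mp:
  assumes "nml L" "\<forall>x\<in>set xs. x \<in> L" "foldr Imp xs c \<in> L"
  shows "c \<in> L"
  using assms(2,3) by (induction xs) (auto intro: nml_mp[OF assms(1)])

lemma nml_tautc:
  assumes "nml L" "\<forall>x\<in>set xs. x \<in> L" "tautology (foldr Imp xs c)"
  shows "c \<in> L"
  using nml_foldr_mp[OF assms(1,2) nml_taut[OF assms(1,3)]] .

lemma nml_mono:
  assumes "nml L" "Imp a b \<in> L" shows "Imp (Box a) (Box b) \<in> L"
  using nml_mp[OF assms(1) nml_nec[OF assms] nml_K[OF assms(1)]] .

lemma nml_boxes:
  assumes "nml L" "foldr Imp xs c \<in> L"
  shows "foldr Imp (map Box xs) (Box c) \<in> L"
  using assms(2)
proof (induction xs arbitrary: c)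
  case Nil then show ?case using nml_nec[OF assms(1)] by simp
next
  case (Cons x xs)
  have "foldr Imp xs (Imp x c) \<in> L"
    by (rule nml_tautc[OF assms(1), of "[foldr Imp (x # xs) c]"]) (use Cons.prems in \<open>auto simp: tautology_def\<close>)
  then have "foldr Imp (map Box xs) (Box (Imp x c)) \<in> L" by (rule Cons.IH)
  then show ?case
    by (intro nml_tautc[OF assms(1), of "[foldr Imp (map Box xs) (Box (Imp x c)), Imp (Box (Imp x c)) (Imp (Box x) (Box c))]"])
       (auto simp: tautology_def nml_K[OF assms(1)])
qed


definition Iff :: "fm \<Rightarrow> fm \<Rightarrow> fm" where "Iff a b = And (Imp a b) (Imp b a)"
lemma peval_Iff[simp]: "peval v (Iff a b) = (peval v a = peval v b)" by (auto simp: Iff_def)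

definition Hb :: "nat \<Rightarrow> fm \<Rightarrow> fm" where
  "Hb r b = And (Imp (And (Var r) (Neg b)) (Dia (And (Neg (Var r)) (Neg b))))
                (Imp (And (Neg (Var r)) (Neg b)) (Dia (And (Var r) (Neg b))))"

fun hyp :: "nat \<Rightarrow> fm \<Rightarrow> fm" where
  "hyp r (Var n) = Top"
| "hyp r Bot = Top"
| "hyp r (Imp a b) = And (hyp r a) (hyp r b)"
| "hyp r (Box a) = And (Hb r a) (hyp r a)"

fun G :: "nat \<Rightarrow> fm \<Rightarrow> nat \<Rightarrow> fm" where
  "G r f 0 = hyp r f"
| "G r f (Suc k) = And (hyp r f) (Box (G r f k))"

fun depth :: "fm \<Rightarrow> nat" where
  "depth (Var n) = 0"
| "depth Bot = 0"
| "depth (Imp a b) = max (depth a) (depth b)"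
| "depth (Box a) = Suc (depth a)"

fun bsubs :: "fm \<Rightarrow> fm set" where
  "bsubs (Var n) = {}"
| "bsubs Bot = {}"
| "bsubs (Imp a b) = bsubs a \<union> bsubs b"
| "bsubs (Box a) = insert a (bsubs a)"

lemma hyp_Hb: "b \<in> bsubs a \<Longrightarrow> peval v (bdot (hyp r a)) \<Longrightarrow> peval v (bdot (Hb r b))"
  by (induction a) auto

lemma bdot_Hb: "bdot (Hb r b) = And (Imp (And (Var r) (Neg (bdot b))) (Neg (And (Neg (And (Neg (Var r)) (Neg (bdot b)))) (Box (Neg (And (Neg (Var r)) (Neg (bdot b))))))))
                (Imp (And (Neg (Var r)) (Neg (bdot b))) (Neg (And (Neg (And (Var r) (Neg (bdot b)))) (Box (Neg (And (Var r) (Neg (bdot b))))))))"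
  by (simp add: Hb_def)

lemma key:
  assumes L: "nml L"
  shows "bsubs a \<subseteq> bsubs f \<Longrightarrow> depth a \<le> k \<Longrightarrow> Imp (bdot (G r f k)) (Iff (bdot a) a) \<in> L"
proof (induction a arbitrary: k)
  case (Var n) then show ?case by (intro nml_taut[OF L]) (auto simp: tautology_def)
next
  case Bot then show ?case by (intro nml_taut[OF L]) (auto simp: tautology_def)
next
  case (Imp a1 a2)
  have 1: "Imp (bdot (G r f k)) (Iff (bdot a1) a1) \<in> L" using Imp by auto
  have 2: "Imp (bdot (G r f k)) (Iff (bdot a2) a2) \<in> L" using Imp by auto
  show ?case
    by (rule nml_tautc[OF L, of "[Imp (bdot (G r f k)) (Iff (bdot a1) a1), Imp (bdot (G r f k)) (Iff (bdot a2) a2)]"])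
       (use 1 2 in \<open>auto simp: tautology_def\<close>)
next
  case (Box b)
  then obtain k' where k: "k = Suc k'" and dk: "depth b \<le> k'" by (cases k) auto
  have bin: "b \<in> bsubs f" and bs: "bsubs b \<subseteq> bsubs f" using Box.prems by auto
  define g' where "g' = bdot (G r f k')"
  define b' where "b' = bdot b"
  define c1 where "c1 = And (Neg (Var r)) (Neg b')"
  define c2 where "c2 = And (Var r) (Neg b')"
  have I: "Imp g' (Iff b' b) \<in> L" using Box.IH[OF bs dk] by (simp add: g'_def b'_def)
  have I1: "foldr Imp [g', b] (Neg c1) \<in> L"
    by (rule nml_tautc[OF L, of "[Imp g' (Iff b' b)]"]) (use I in \<open>auto simp: tautology_def c1_def\<close>)
  have I2: "foldr Imp [g', b] (Neg c2) \<in> L"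
    by (rule nml_tautc[OF L, of "[Imp g' (Iff b' b)]"]) (use I in \<open>auto simp: tautology_def c2_def\<close>)
  have I3: "foldr Imp [g', b] b' \<in> L"
    by (rule nml_tautc[OF L, of "[Imp g' (Iff b' b)]"]) (use I in \<open>auto simp: tautology_def\<close>)
  have I4: "foldr Imp [g', b'] b \<in> L"
    by (rule nml_tautc[OF L, of "[Imp g' (Iff b' b)]"]) (use I in \<open>auto simp: tautology_def\<close>)
  have B1: "Imp (Box g') (Imp (Box b) (Box (Neg c1))) \<in> L" using nml_boxes[OF L I1] by simp
  have B2: "Imp (Box g') (Imp (Box b) (Box (Neg c2))) \<in> L" using nml_boxes[OF L I2] by simp
  have B3: "Imp (Box g') (Imp (Box b) (Box b')) \<in> L" using nml_boxes[OF L I3] by simp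
  have B4: "Imp (Box g') (Imp (Box b') (Box b)) \<in> L" using nml_boxes[OF L I4] by simp
  have H: "Imp (bdot (hyp r f)) (bdot (Hb r b)) \<in> L"
    by (rule nml_taut[OF L]) (auto simp: tautology_def intro: hyp_Hb[OF bin])
  have gk: "bdot (G r f k) = And (bdot (hyp r f)) (And g' (Box g'))" by (simp add: k g'_def)
  show ?case unfolding gk
    by (rule nml_tautc[OF L, of "[Imp g' (Iff b' b), Imp (Box g') (Imp (Box b) (Box (Neg c1))),
        Imp (Box g') (Imp (Box b) (Box (Neg c2))), Imp (Box g') (Imp (Box b) (Box b')),
        Imp (Box g') (Imp (Box b') (Box b)), Imp (bdot (hyp r f)) (bdot (Hb r b))]"])
       (use I B1 B2 B3 B4 H in \<open>auto simp: tautology_def bdot_Hb c1_def c2_def b'_def\<close>)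
qed

definition psi :: "nat \<Rightarrow> fm \<Rightarrow> fm" where "psi r f = Imp (G r f (depth f)) f"

lemma bdot_psi:
  assumes L: "nml L" and f: "f \<in> L"
  shows "bdot (psi r f) \<in> L"
proof -
  have "Imp (bdot (G r f (depth f))) (Iff (bdot f) f) \<in> L" by (rule key[OF L]) auto
  then show ?thesis unfolding psi_def
    by (intro nml_tautc[OF L, of "[Imp (bdot (G r f (depth f))) (Iff (bdot f) f), f]"])
       (use f in \<open>auto simp: tautology_def\<close>)
qed


fun sat :: "('w \<Rightarrow> 'w \<Rightarrow> bool) \<Rightarrow> (nat \<Rightarrow> 'w \<Rightarrow> bool) \<Rightarrow> 'w \<Rightarrow> fm \<Rightarrow> bool" where
  "sat R V w (Var n) = V n w"
| "sat R V w Bot = False"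
| "sat R V w (Imp a b) = (sat R V w a \<longrightarrow> sat R V w b)"
| "sat R V w (Box a) = (\<forall>u. R w u \<longrightarrow> sat R V u a)"

definition valid :: "'w set \<Rightarrow> ('w \<Rightarrow> 'w \<Rightarrow> bool) \<Rightarrow> fm \<Rightarrow> bool" where
  "valid W R a \<longleftrightarrow> (\<forall>V. \<forall>w\<in>W. sat R V w a)"

definition closed :: "'w set \<Rightarrow> ('w \<Rightarrow> 'w \<Rightarrow> bool) \<Rightarrow> bool" where
  "closed W R \<longleftrightarrow> (\<forall>x\<in>W. \<forall>y. R x y \<longrightarrow> y \<in> W)"

lemma sat_Neg[simp]: "sat R V w (Neg a) = (\<not> sat R V w a)" by (simp add: Neg_def)
lemma sat_And[simp]: "sat R V w (And a b) = (sat R V w a \<and> sat R V w b)" by (simp add: And_def)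
lemma sat_Or[simp]: "sat R V w (Or a b) = (sat R V w a \<or> sat R V w b)" by (auto simp: Or_def)
lemma sat_Top[simp]: "sat R V w Top" by (simp add: Top_def)
lemma sat_Dia[simp]: "sat R V w (Dia a) = (\<exists>u. R w u \<and> sat R V u a)" by (simp add: Dia_def)

lemma sat_subst: "sat R V w (subst s a) = sat R (\<lambda>n u. sat R V u (s n)) w a"
  by (induction a arbitrary: w) auto

lemma peval_sat: "peval (\<lambda>b. sat R V w b) a = sat R V w a"
  by (induction a) auto

lemma nml_valid:
  assumes "closed W R" shows "nml {a. valid W R a}"
proof -
  have 1: "{a. tautology a} \<subseteq> {a. valid W R a}"
  proof
    fix a assume "a \<in> {a. tautology a}"
    then have "\<And>v. peval v a" by (simp add: tautology_def)
    then have "\<And>V w. sat R V w a" by (subst peval_sat[symmetric])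
    then show "a \<in> {a. valid W R a}" unfolding valid_def by simp
  qed
  have 2: "Imp (Box (Imp p q)) (Imp (Box p) (Box q)) \<in> {a. valid W R a}" by (simp add: valid_def)
  have 3: "\<forall>a b. a \<in> {a. valid W R a} \<longrightarrow> Imp a b \<in> {a. valid W R a} \<longrightarrow> b \<in> {a. valid W R a}"
    by (simp add: valid_def)
  have 4: "\<forall>a. a \<in> {a. valid W R a} \<longrightarrow> Box a \<in> {a. valid W R a}"
    using assms unfolding closed_def valid_def by simp
  have 5: "\<forall>a s. a \<in> {a. valid W R a} \<longrightarrow> subst s a \<in> {a. valid W R a}"
    by (simp add: valid_def sat_subst)
  show ?thesis unfolding nml_def by (rule conjI[OF 1 conjI[OF 2 conjI[OF 3 conjI[OF 4 5]]]])
qed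

lemma nml_Kax: "nml L \<Longrightarrow> Imp (Box (Imp p q)) (Imp (Box p) (Box q)) \<in> L" unfolding nml_def by blast

lemma nml_Inter: assumes A: "\<forall>M\<in>S. nml M" shows "nml (\<Inter>S)"
  unfolding nml_def
proof (intro conjI allI impI)
  show "{a. tautology a} \<subseteq> \<Inter> S"
  proof (intro subsetI InterI)
    fix a M assume "a \<in> {a. tautology a}" "M \<in> S"
    then show "a \<in> M" using A nml_taut by auto
  qed
  show "Imp (Box (Imp p q)) (Imp (Box p) (Box q)) \<in> \<Inter> S"
  proof (intro InterI)
    fix M assume "M \<in> S" then show "Imp (Box (Imp p q)) (Imp (Box p) (Box q)) \<in> M" using A nml_Kax by auto
  qed
  fix a b assume h: "a \<in> \<Inter> S" "Imp a b \<in> \<Inter> S"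
  show "b \<in> \<Inter> S"
  proof (intro InterI)
    fix M assume M: "M \<in> S" then show "b \<in> M" using h A nml_mp[of M a b] by auto
  qed
next
  fix a assume h: "a \<in> \<Inter> S"
  show "Box a \<in> \<Inter> S"
  proof (intro InterI)
    fix M assume M: "M \<in> S" then show "Box a \<in> M" using h A nml_nec[of M a] by auto
  qed
next
  fix a s assume h: "a \<in> \<Inter> S"
  show "subst s a \<in> \<Inter> S"
  proof (intro InterI)
    fix M assume M: "M \<in> S" then show "subst s a \<in> M" using h A nml_subst[of M a s] by auto
  qed
qed

lemma nml_K_set: "nml K" unfolding K_def by (rule nml_Inter) auto
lemma nml_ext: "nml (L \<oplus> a)" unfolding ext_def by (rule nml_Inter) auto
lemma ext_sub: "L \<subseteq> L \<oplus> a" unfolding ext_def by auto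
lemma ext_ax: "a \<in> L \<oplus> a" unfolding ext_def by auto
lemma ext_least: "nml M \<Longrightarrow> L \<subseteq> M \<Longrightarrow> a \<in> M \<Longrightarrow> L \<oplus> a \<subseteq> M" unfolding ext_def by auto
lemma K_least: "nml M \<Longrightarrow> K \<subseteq> M" unfolding K_def by auto


definition cons :: "fm set \<Rightarrow> fm set \<Rightarrow> bool" where
  "cons L S \<longleftrightarrow> (\<forall>xs. set xs \<subseteq> S \<longrightarrow> foldr Imp xs Bot \<notin> L)"

definition mcs :: "fm set \<Rightarrow> fm set \<Rightarrow> bool" where
  "mcs L S \<longleftrightarrow> cons L S \<and> (\<forall>a. a \<notin> S \<longrightarrow> \<not> cons L (insert a S))"

lemma lindenbaum:
  assumes "cons L S0" shows "\<exists>S. S0 \<subseteq> S \<and> mcs L S"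
proof -
  let ?A = "{S. S0 \<subseteq> S \<and> cons L S}"
  have "\<exists>M\<in>?A. \<forall>X\<in>?A. M \<subseteq> X \<longrightarrow> X = M"
  proof (rule subset_Zorn_nonempty)
    show "?A \<noteq> {}" using assms by auto
  next
    fix C assume C: "C \<noteq> {}" "subset.chain ?A C"
    show "\<Union>C \<in> ?A"
    proof
      from C(1) obtain B0 where "B0 \<in> C" by blast
      then have "S0 \<subseteq> \<Union>C" using C(2) by (auto simp: subset_chain_def)
      moreover have "cons L (\<Union>C)"
        unfolding cons_def
      proof (intro allI impI)
        fix xs assume xs: "set xs \<subseteq> \<Union>C"
        obtain B where "B \<in> C" "set xs \<subseteq> B"
          using finite_subset_Union_chain[OF _ xs C(1) C(2)] by auto
        then show "foldr Imp xs Bot \<notin> L" using C(2) by (auto simp: subset_chain_def cons_def)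
      qed
      ultimately show "S0 \<subseteq> \<Union>C \<and> cons L (\<Union>C)" by blast
    qed
  qed
  then obtain M where M: "S0 \<subseteq> M" "cons L M" and max: "\<forall>X\<in>?A. M \<subseteq> X \<longrightarrow> X = M" by auto
  have "mcs L M" unfolding mcs_def
  proof (intro conjI allI impI M(2))
    fix a assume "a \<notin> M"
    show "\<not> cons L (insert a M)"
    proof
      assume "cons L (insert a M)"
      then have "insert a M \<in> ?A" using M(1) by auto
      then have "insert a M = M" using max by blast
      then show False using \<open>a \<notin> M\<close> by auto
    qed
  qed
  then show ?thesis using M by auto
qed

definition Rc :: "fm set \<Rightarrow> fm set \<Rightarrow> fm set \<Rightarrow> bool" where
  "Rc L S U \<longleftrightarrow> mcs L U \<and> (\<forall>a. Box a \<in> S \<longrightarrow> a \<in> U)"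

context
  fixes L assumes L: "nml L"
begin

lemma mcs_deriv:
  assumes S: "mcs L S" and xs: "set xs \<subseteq> S" and d: "foldr Imp xs c \<in> L"
  shows "c \<in> S"
proof (rule ccontr)
  assume "c \<notin> S"
  then have "\<not> cons L (insert c S)" using S by (auto simp: mcs_def)
  then obtain ys where ys: "set ys \<subseteq> insert c S" "foldr Imp ys Bot \<in> L" by (auto simp: cons_def)
  have d2: "foldr Imp (xs @ filter (\<lambda>y. y \<noteq> c) ys) Bot \<in> L"
    by (rule nml_tautc[OF L, of "[foldr Imp xs c, foldr Imp ys Bot]"])
       (use ys d in \<open>auto simp: tautology_def\<close>)
  moreover have s2: "set (xs @ filter (\<lambda>y. y \<noteq> c) ys) \<subseteq> S" using xs ys by auto
  have "cons L S" using S by (simp add: mcs_def)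
  then show False using d2 s2 unfolding cons_def by blast
qed

lemma mcs_L: "mcs L S \<Longrightarrow> a \<in> L \<Longrightarrow> a \<in> S"
  using mcs_deriv[of S "[]" a] by simp

lemma mcs_Bot: assumes S: "mcs L S" shows "Bot \<notin> S"
proof
  assume "Bot \<in> S"
  then have s: "set [Bot] \<subseteq> S" by simp
  have d: "foldr Imp [Bot] Bot \<in> L" by (rule nml_taut[OF L]) (simp add: tautology_def)
  have "cons L S" using S by (simp add: mcs_def)
  then show False using s d unfolding cons_def by blast
qed

lemma mcs_Neg: assumes S: "mcs L S" shows "Neg a \<in> S \<longleftrightarrow> a \<notin> S"
proof
  assume na: "Neg a \<in> S"
  show "a \<notin> S"
  proof
    assume "a \<in> S"
    then have "Bot \<in> S" using na mcs_deriv[OF S, of "[Neg a, a]" Bot] nml_taut[OF L]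
      by (auto simp: tautology_def)
    then show False using mcs_Bot[OF S] by auto
  qed
next
  assume "a \<notin> S"
  then have "\<not> cons L (insert a S)" using S by (auto simp: mcs_def)
  then obtain ys where ys: "set ys \<subseteq> insert a S" "foldr Imp ys Bot \<in> L" by (auto simp: cons_def)
  have dd: "foldr Imp (filter (\<lambda>y. y \<noteq> a) ys) (Neg a) \<in> L"
    by (rule nml_tautc[OF L, of "[foldr Imp ys Bot]"]) (use ys in \<open>auto simp: tautology_def\<close>)
  show "Neg a \<in> S" by (rule mcs_deriv[OF S _ dd]) (use ys in auto)
qed

lemma mcs_Imp: assumes S: "mcs L S" shows "Imp a b \<in> S \<longleftrightarrow> (a \<in> S \<longrightarrow> b \<in> S)"
proof
  assume "Imp a b \<in> S"
  then show "a \<in> S \<longrightarrow> b \<in> S"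
    using mcs_deriv[OF S, of "[Imp a b, a]" b] nml_taut[OF L] by (auto simp: tautology_def)
next
  assume h: "a \<in> S \<longrightarrow> b \<in> S"
  show "Imp a b \<in> S"
  proof (cases "a \<in> S")
    case True
    then show ?thesis using h mcs_deriv[OF S, of "[b]" "Imp a b"] nml_taut[OF L] by (auto simp: tautology_def)
  next
    case False
    then have "Neg a \<in> S" using mcs_Neg[OF S] by auto
    then show ?thesis using mcs_deriv[OF S, of "[Neg a]" "Imp a b"] nml_taut[OF L] by (auto simp: tautology_def)
  qed
qed

lemma mcs_boxes:
  assumes S: "mcs L S" and d: "foldr Imp xs c \<in> L" and xs: "\<forall>x\<in>set xs. Box x \<in> S"
  shows "Box c \<in> S"
  using mcs_deriv[OF S _ nml_boxes[OF L d]] xs by auto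

lemma box_witness:
  assumes S: "mcs L S" and nb: "Box a \<notin> S"
  shows "\<exists>U. Rc L S U \<and> a \<notin> U"
proof -
  have "cons L (insert (Neg a) {b. Box b \<in> S})"
    unfolding cons_def
  proof (intro allI impI notI)
    fix xs assume xs: "set xs \<subseteq> insert (Neg a) {b. Box b \<in> S}" and d: "foldr Imp xs Bot \<in> L"
    have "foldr Imp (filter (\<lambda>y. y \<noteq> Neg a) xs) a \<in> L"
      by (rule nml_tautc[OF L, of "[foldr Imp xs Bot]"]) (use xs d in \<open>auto simp: tautology_def\<close>)
    then have "Box a \<in> S" by (rule mcs_boxes[OF S]) (use xs in auto)
    then show False using nb by auto
  qed
  then obtain U where "insert (Neg a) {b. Box b \<in> S} \<subseteq> U" "mcs L U" using lindenbaum by blast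
  then show ?thesis using mcs_Neg[of U a] by (auto simp: Rc_def)
qed

lemma truth:
  assumes "mcs L S" shows "sat (Rc L) (\<lambda>n U. Var n \<in> U) S a \<longleftrightarrow> a \<in> S"
  using assms
proof (induction a arbitrary: S)
  case (Var n) then show ?case by simp
next
  case Bot then show ?case using mcs_Bot by auto
next
  case (Imp a b) then show ?case using mcs_Imp by auto
next
  case (Box a)
  show ?case
  proof
    assume h: "sat (Rc L) (\<lambda>n U. Var n \<in> U) S (Box a)"
    show "Box a \<in> S"
    proof (rule ccontr)
      assume "Box a \<notin> S"
      then obtain U where U: "Rc L S U" "a \<notin> U" using box_witness[OF Box.prems] by auto
      then have "sat (Rc L) (\<lambda>n U. Var n \<in> U) U a" using h by simp
      moreover have "mcs L U" using U(1) by (simp add: Rc_def)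
      ultimately show False using Box.IH U(2) by blast
    qed
  next
    assume ba: "Box a \<in> S"
    have "sat (Rc L) (\<lambda>n U. Var n \<in> U) U a" if U: "Rc L S U" for U
    proof -
      have "mcs L U" "a \<in> U" using U ba by (auto simp: Rc_def)
      then show ?thesis using Box.IH by blast
    qed
    then show "sat (Rc L) (\<lambda>n U. Var n \<in> U) S (Box a)" by simp
  qed
qed

lemma canon_closed: "closed {S. mcs L S} (Rc L)" by (auto simp: closed_def Rc_def)

lemma countermodel:
  assumes "f \<notin> L" shows "\<exists>S. mcs L S \<and> \<not> sat (Rc L) (\<lambda>n U. Var n \<in> U) S f"
proof -
  have "cons L {Neg f}"
    unfolding cons_def
  proof (intro allI impI notI)
    fix xs assume xs: "set xs \<subseteq> {Neg f}" and d: "foldr Imp xs Bot \<in> L"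
    have "f \<in> L" by (rule nml_tautc[OF L, of "[foldr Imp xs Bot]"]) (use xs d in \<open>auto simp: tautology_def\<close>)
    then show False using assms by auto
  qed
  then obtain S where "Neg f \<in> S" "mcs L S" using lindenbaum by blast
  then show ?thesis using truth mcs_Neg by blast
qed

end


definition reflW :: "'w set \<Rightarrow> ('w \<Rightarrow> 'w \<Rightarrow> bool) \<Rightarrow> bool" where
  "reflW W R \<longleftrightarrow> (\<forall>x\<in>W. R x x)"
definition symW :: "'w set \<Rightarrow> ('w \<Rightarrow> 'w \<Rightarrow> bool) \<Rightarrow> bool" where
  "symW W R \<longleftrightarrow> (\<forall>x\<in>W. \<forall>y\<in>W. R x y \<longrightarrow> R y x)"
definition transW :: "'w set \<Rightarrow> ('w \<Rightarrow> 'w \<Rightarrow> bool) \<Rightarrow> bool" where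
  "transW W R \<longleftrightarrow> (\<forall>x\<in>W. \<forall>y\<in>W. \<forall>z\<in>W. R x y \<longrightarrow> R y z \<longrightarrow> R x z)"
definition conflW :: "'w set \<Rightarrow> ('w \<Rightarrow> 'w \<Rightarrow> bool) \<Rightarrow> bool" where
  "conflW W R \<longleftrightarrow> (\<forall>x\<in>W. \<forall>y\<in>W. \<forall>z\<in>W. R x y \<longrightarrow> R x z \<longrightarrow> (\<exists>w\<in>W. R y w \<and> R z w))"
definition connW :: "'w set \<Rightarrow> ('w \<Rightarrow> 'w \<Rightarrow> bool) \<Rightarrow> bool" where
  "connW W R \<longleftrightarrow> (\<forall>x\<in>W. \<forall>y\<in>W. \<forall>z\<in>W. R x y \<longrightarrow> R x z \<longrightarrow> R y z \<or> R z y)"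

definition dW :: "'w set \<Rightarrow> ('w \<times> bool) set" where "dW W = W \<times> UNIV"
definition dR :: "('w \<Rightarrow> 'w \<Rightarrow> bool) \<Rightarrow> ('w \<times> bool) \<Rightarrow> ('w \<times> bool) \<Rightarrow> bool" where
  "dR R u v = R (fst u) (fst v)"

lemma dW_fst: "u \<in> dW W \<longleftrightarrow> fst u \<in> W" by (cases u) (simp add: dW_def)
lemma dR_fst: "dR R u v = R (fst u) (fst v)" by (simp add: dR_def)

lemma d_closed: assumes "closed W R" shows "closed (dW W) (dR R)"
  unfolding closed_def Ball_def dW_fst dR_fst using assms unfolding closed_def by blast
lemma d_refl: assumes "reflW W R" shows "reflW (dW W) (dR R)"
  unfolding reflW_def Ball_def dW_fst dR_fst using assms unfolding reflW_def by blast
lemma d_sym: assumes "symW W R" shows "symW (dW W) (dR R)"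
  unfolding symW_def Ball_def dW_fst dR_fst using assms unfolding symW_def by blast
lemma d_trans: assumes "transW W R" shows "transW (dW W) (dR R)"
  unfolding transW_def Ball_def dW_fst dR_fst using assms unfolding transW_def by blast
lemma d_conn: assumes "connW W R" shows "connW (dW W) (dR R)"
  unfolding connW_def Ball_def dW_fst dR_fst using assms unfolding connW_def by blast
lemma d_confl: "conflW W R \<Longrightarrow> conflW (dW W) (dR R)" by (simp add: conflW_def dW_def dR_def)

fun vars :: "fm \<Rightarrow> nat set" where
  "vars (Var n) = {n}"
| "vars Bot = {}"
| "vars (Imp a b) = vars a \<union> vars b"
| "vars (Box a) = vars a"

lemma finite_vars: "finite (vars a)" by (induction a) auto

definition dV :: "nat \<Rightarrow> (nat \<Rightarrow> 'w \<Rightarrow> bool) \<Rightarrow> nat \<Rightarrow> 'w \<times> bool \<Rightarrow> bool" where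
  "dV r V n u = (if n = r then snd u else V n (fst u))"

lemma d_sat: "r \<notin> vars a \<Longrightarrow> sat (dR R) (dV r V) u a = sat R V (fst u) a"
proof (induction a arbitrary: u)
  case (Box a)
  then have IH: "\<And>u. sat (dR R) (dV r V) u a = sat R V (fst u) a" by simp
  have "(\<forall>v::_ \<times> bool. R (fst u) (fst v) \<longrightarrow> sat R V (fst v) a) = (\<forall>y. R (fst u) y \<longrightarrow> sat R V y a)"
  proof
    assume h: "\<forall>v::_ \<times> bool. R (fst u) (fst v) \<longrightarrow> sat R V (fst v) a"
    show "\<forall>y. R (fst u) y \<longrightarrow> sat R V y a"
    proof (intro allI impI)
      fix y assume "R (fst u) y" then show "sat R V y a" using h[rule_format, of "(y, True)"] by simp
    qed
  qed simp
  have "sat (dR R) (dV r V) u (Box a) = (\<forall>v. dR R u v \<longrightarrow> sat (dR R) (dV r V) v a)" by (rule sat.simps(4))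
  also have "\<dots> = (\<forall>v::_ \<times> bool. R (fst u) (fst v) \<longrightarrow> sat R V (fst v) a)" by (simp only: IH dR_def)
  also have "\<dots> = (\<forall>y. R (fst u) y \<longrightarrow> sat R V y a)" by fact
  also have "\<dots> = sat R V (fst u) (Box a)" by simp
  finally show ?case .
qed (simp_all add: dV_def)

lemma d_hyp:
  assumes "reflW W R" "fst u \<in> W"
  shows "r \<notin> vars a \<Longrightarrow> sat (dR R) (dV r V) u (hyp r a)"
proof (induction a)
  case (Box b)
  have "sat (dR R) (dV r V) u (Hb r b)"
  proof -
    have rb: "r \<notin> vars b" using Box by simp
    have rr: "R (fst u) (fst u)" using assms by (auto simp: reflW_def)
    have w1: "dR R u (fst u, False)" "dR R u (fst u, True)" using rr by (auto simp: dR_def)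
    show ?thesis unfolding Hb_def using w1 d_sat[OF rb, of R V]
      by (auto simp: dV_def)
  qed
  then show ?case using Box by simp
qed auto

lemma d_G:
  assumes "reflW W R" "closed W R" "r \<notin> vars f"
  shows "fst u \<in> W \<Longrightarrow> sat (dR R) (dV r V) u (G r f k)"
proof (induction k arbitrary: u)
  case 0 then show ?case using d_hyp[OF assms(1)] assms(3) by simp
next
  case (Suc k)
  have "\<forall>v. dR R u v \<longrightarrow> fst v \<in> W" using Suc.prems assms(2) by (auto simp: closed_def dR_def)
  then show ?case using d_hyp[OF assms(1) Suc.prems] assms(3) Suc.IH by auto
qed

lemma general:
  fixes P :: "(fm set \<times> bool) set \<Rightarrow> ((fm set \<times> bool) \<Rightarrow> (fm set \<times> bool) \<Rightarrow> bool) \<Rightarrow> bool"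
    and Q :: "fm set set \<Rightarrow> (fm set \<Rightarrow> fm set \<Rightarrow> bool) \<Rightarrow> bool"
  assumes L0: "nml L0"
    and sound: "\<And>W R. closed W R \<Longrightarrow> P W R \<Longrightarrow> L0 \<subseteq> {a. valid W R a}"
    and canon: "Q {S. mcs L0 S} (Rc L0)"
    and dbl: "\<And>W R. Q W R \<Longrightarrow> P (dW W) (dR R)"
    and rfl: "\<And>W R. Q W R \<Longrightarrow> reflW W R"
  shows "strong_boxdot L0"
  unfolding strong_boxdot_def
proof (intro allI impI subsetI)
  fix L f assume L: "nml L" and BD: "BD L \<subseteq> L0" and f: "f \<in> L"
  show "f \<in> L0"
  proof (rule ccontr)
    assume nf: "f \<notin> L0"
    obtain r where r: "r \<notin> vars f" using ex_new_if_finite[OF infinite_UNIV_nat finite_vars] by auto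
    have "psi r f \<in> L0" using bdot_psi[OF L f, of r] BD by (auto simp: BD_def)
    obtain S where S: "mcs L0 S" and ns: "\<not> sat (Rc L0) (\<lambda>n U. Var n \<in> U) S f"
      using countermodel[OF L0 nf] by auto
    let ?W = "{S. mcs L0 S}" and ?R = "Rc L0" and ?V = "\<lambda>n U. Var n \<in> U"
    have cl: "closed ?W ?R" using canon_closed[OF L0] .
    have "sat (dR ?R) (dV r ?V) (S, True) (G r f (depth f))"
      by (rule d_G[OF rfl[OF canon] cl r]) (use S in simp)
    moreover have "\<not> sat (dR ?R) (dV r ?V) (S, True) f" using d_sat[OF r, of "Rc L0" ?V "(S, True)"] ns by simp
    ultimately have "\<not> valid (dW ?W) (dR ?R) (psi r f)"
      unfolding valid_def psi_def using S by (auto simp: dW_def)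
    moreover have "L0 \<subseteq> {a. valid (dW ?W) (dR ?R) a}"
      by (rule sound[OF d_closed[OF cl] dbl[OF canon]])
    ultimately show False using \<open>psi r f \<in> L0\<close> by auto
  qed
qed


lemma v_T: "reflW W R \<Longrightarrow> valid W R (Imp (Box p) p)"
  by (auto simp: valid_def reflW_def)
lemma v_B: assumes cl: "closed W R" and sy: "symW W R" shows "valid W R (Imp p (Box (Dia p)))"
  unfolding valid_def
proof (intro allI ballI)
  fix V w assume w: "w \<in> W"
  show "sat R V w (Imp p (Box (Dia p)))"
  proof (simp only: sat.simps sat_Dia, intro impI allI)
    fix y assume h: "V 0 w" and y: "R w y"
    have "y \<in> W" using cl w y unfolding closed_def by blast
    then have "R y w" using sy w y unfolding symW_def by blast
    then show "\<exists>u. R y u \<and> V 0 u" using h by blast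
  qed
qed
lemma v_4: assumes cl: "closed W R" and t: "transW W R" shows "valid W R (Imp (Box p) (Box (Box p)))"
  unfolding valid_def
proof (intro allI ballI)
  fix V w assume w: "w \<in> W"
  show "sat R V w (Imp (Box p) (Box (Box p)))"
  proof (simp only: sat.simps, intro impI allI)
    fix y z assume h: "\<forall>u. R w u \<longrightarrow> V 0 u" and y: "R w y" and z: "R y z"
    have "y \<in> W" "z \<in> W" using cl w y z unfolding closed_def by blast+
    then have "R w z" using t w y z unfolding transW_def by blast
    then show "V 0 z" using h by blast
  qed
qed

lemma v_2: assumes cl: "closed W R" and c: "conflW W R" shows "valid W R (Imp (Dia (Box p)) (Box (Dia p)))"
  unfolding valid_def
proof (intro allI ballI)
  fix V w assume w: "w \<in> W"
  show "sat R V w (Imp (Dia (Box p)) (Box (Dia p)))"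
  proof (simp only: sat.simps sat_Dia, intro impI allI)
    fix z assume h: "\<exists>y. R w y \<and> (\<forall>u. R y u \<longrightarrow> V 0 u)" and z: "R w z"
    then obtain y where y: "R w y" "\<forall>u. R y u \<longrightarrow> V 0 u" by blast
    have "y \<in> W" "z \<in> W" using cl w y z unfolding closed_def by blast+
    then obtain u where "R y u" "R z u" using c w y z unfolding conflW_def by blast
    then show "\<exists>u. R z u \<and> V 0 u" using y by blast
  qed
qed

lemma v_3: assumes cl: "closed W R" and c: "connW W R"
  shows "valid W R (Or (Box (Imp (Box p) q)) (Box (Imp (Box q) p)))"
  unfolding valid_def
proof (intro allI ballI)
  fix V w assume w: "w \<in> W"
  show "sat R V w (Or (Box (Imp (Box p) q)) (Box (Imp (Box q) p)))"
  proof (rule ccontr)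
    assume "\<not> sat R V w (Or (Box (Imp (Box p) q)) (Box (Imp (Box q) p)))"
    then obtain y z where y: "R w y" "\<forall>u. R y u \<longrightarrow> V 0 u" "\<not> V 1 y"
      and z: "R w z" "\<forall>u. R z u \<longrightarrow> V 1 u" "\<not> V 0 z" by auto
    have yz: "y \<in> W" "z \<in> W" using cl w y(1) z(1) unfolding closed_def by blast+
    have "R y z \<or> R z y" using c w yz y(1) z(1) unfolding connW_def by blast
    then show False using y z by blast
  qed
qed

lemma sound_T: assumes "closed W R" "reflW W R" shows "T \<subseteq> {a. valid W R a}"
  unfolding T_def by (rule ext_least[OF nml_valid[OF assms(1)] K_least[OF nml_valid[OF assms(1)]]]) (simp add: v_T[OF assms(2)])
lemma sound_KTB: assumes "closed W R" "reflW W R \<and> symW W R" shows "KTB \<subseteq> {a. valid W R a}"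
  unfolding KTB_def
  by (rule ext_least[OF nml_valid[OF assms(1)] sound_T[OF assms(1)]]) (use assms v_B[OF assms(1)] in simp_all)
lemma sound_S4: assumes "closed W R" "reflW W R \<and> transW W R" shows "S4 \<subseteq> {a. valid W R a}"
  unfolding S4_def
  by (rule ext_least[OF nml_valid[OF assms(1)] sound_T[OF assms(1)]]) (use assms v_4[OF assms(1)] in simp_all)
lemma sound_S5: assumes "closed W R" "reflW W R \<and> transW W R \<and> symW W R" shows "S5 \<subseteq> {a. valid W R a}"
  unfolding S5_def
  by (rule ext_least[OF nml_valid[OF assms(1)] sound_S4[OF assms(1)]]) (use assms v_B[OF assms(1)] in simp_all)
lemma sound_S4_2: assumes "closed W R" "reflW W R \<and> transW W R \<and> conflW W R" shows "S4_2 \<subseteq> {a. valid W R a}"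
  unfolding S4_2_def
  by (rule ext_least[OF nml_valid[OF assms(1)] sound_S4[OF assms(1)]]) (use assms v_2[OF assms(1)] in simp_all)
lemma sound_S4_3: assumes "closed W R" "reflW W R \<and> transW W R \<and> connW W R" shows "S4_3 \<subseteq> {a. valid W R a}"
proof -
  have "valid W R (Or (Box (Imp (Box p) q)) (Box (Imp (Box q) p)))" using v_3[OF assms(1)] assms(2) by blast
  then show ?thesis unfolding S4_3_def
    by (intro ext_least[OF nml_valid[OF assms(1)] sound_S4[OF assms(1)]]) (use assms in simp_all)
qed

definition s2 :: "fm \<Rightarrow> fm \<Rightarrow> nat \<Rightarrow> fm" where "s2 a b = (\<lambda>n. if n = 0 then a else b)"

lemma inst1: "nml L \<Longrightarrow> ax \<in> L \<Longrightarrow> subst (s2 a b) ax \<in> L" by (rule nml_subst)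

context fixes L assumes L: "nml L"
begin

lemma c_T: assumes "Imp (Box p) p \<in> L" shows "reflW {S. mcs L S} (Rc L)"
proof -
  { fix S a assume S: "mcs L S" "Box a \<in> S"
    have "Imp (Box a) a \<in> L" using inst1[OF L assms, of a a] by (simp add: s2_def)
    then have "a \<in> S" using mcs_Imp[OF L S(1)] mcs_L[OF L S(1)] S(2) by blast }
  then show ?thesis by (auto simp: reflW_def Rc_def)
qed

lemma c_4: assumes "Imp (Box p) (Box (Box p)) \<in> L" shows "transW {S. mcs L S} (Rc L)"
proof -
  { fix S a assume S: "mcs L S" "Box a \<in> S"
    have "Imp (Box a) (Box (Box a)) \<in> L" using inst1[OF L assms, of a a] by (simp add: s2_def)
    then have "Box (Box a) \<in> S" using mcs_Imp[OF L S(1)] mcs_L[OF L S(1)] S(2) by blast }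
  then show ?thesis by (auto simp: transW_def Rc_def)
qed

lemma c_B: assumes "Imp p (Box (Dia p)) \<in> L" shows "symW {S. mcs L S} (Rc L)"
  unfolding symW_def
proof (intro ballI impI)
  fix S U assume S: "S \<in> {S. mcs L S}" and U: "U \<in> {S. mcs L S}" and R: "Rc L S U"
  have "\<forall>a. Box a \<in> U \<longrightarrow> a \<in> S"
  proof (intro allI impI)
    fix a assume ba: "Box a \<in> U"
    show "a \<in> S"
    proof (rule ccontr)
      assume "a \<notin> S"
      then have "Neg a \<in> S" using mcs_Neg[OF L] S by auto
      moreover have "Imp (Neg a) (Box (Dia (Neg a))) \<in> L" using inst1[OF L assms, of "Neg a" "Neg a"] by (simp add: s2_def Dia_def Neg_def)
      ultimately have "Box (Dia (Neg a)) \<in> S" using mcs_Imp[OF L] mcs_L[OF L] S by blast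
      then have "Dia (Neg a) \<in> U" using R by (auto simp: Rc_def)
      then have "Box (Neg (Neg a)) \<notin> U" using mcs_Neg[OF L] U by (auto simp: Dia_def)
      moreover have "Box (Neg (Neg a)) \<in> U"
        by (rule mcs_boxes[OF L _ _, of U "[a]"]) (use U ba nml_taut[OF L] in \<open>auto simp: tautology_def\<close>)
      ultimately show False by auto
    qed
  qed
  then show "Rc L U S" using S by (auto simp: Rc_def)
qed

lemma peval_foldr_And: "peval v (foldr And ys Top) = (\<forall>y\<in>set ys. peval v y)"
  by (induction ys) auto

lemma c_2: assumes "Imp (Dia (Box p)) (Box (Dia p)) \<in> L" shows "conflW {S. mcs L S} (Rc L)"
  unfolding conflW_def
proof (intro ballI impI)
  fix S U1 U2 assume S: "S \<in> {S. mcs L S}" and U1: "U1 \<in> {S. mcs L S}" and U2: "U2 \<in> {S. mcs L S}"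
    and R1: "Rc L S U1" and R2: "Rc L S U2"
  have "cons L ({a. Box a \<in> U1} \<union> {a. Box a \<in> U2})"
    unfolding cons_def
  proof (intro allI impI notI)
    fix xs assume xs: "set xs \<subseteq> {a. Box a \<in> U1} \<union> {a. Box a \<in> U2}" and d: "foldr Imp xs Bot \<in> L"
    define ys where "ys = filter (\<lambda>x. Box x \<in> U1) xs"
    define zs where "zs = filter (\<lambda>x. Box x \<notin> U1) xs"
    define c where "c = foldr And ys Top"
    have "Box c \<in> U1"
      by (rule mcs_boxes[OF L _ _, of U1 ys]) (use U1 nml_taut[OF L] in \<open>auto simp: tautology_def c_def ys_def peval_foldr_And\<close>)
    have dz: "foldr Imp zs (Neg c) \<in> L"
      by (rule nml_tautc[OF L, of "[foldr Imp xs Bot]"]) (use d in \<open>auto simp: tautology_def c_def ys_def zs_def peval_foldr_And\<close>)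
    have nc: "Box (Neg c) \<in> U2"
      by (intro mcs_boxes[OF L _ dz]) (use U2 xs in \<open>auto simp: zs_def\<close>)
    have "Dia (Box c) \<in> S"
    proof (rule ccontr)
      assume "Dia (Box c) \<notin> S"
      then have "Box (Neg (Box c)) \<in> S" using mcs_Neg[OF L] S by (auto simp: Dia_def)
      then have "Neg (Box c) \<in> U1" using R1 by (auto simp: Rc_def)
      then show False using mcs_Neg[OF L] U1 \<open>Box c \<in> U1\<close> by auto
    qed
    moreover have "Imp (Dia (Box c)) (Box (Dia c)) \<in> L" using inst1[OF L assms, of c c] by (simp add: s2_def Dia_def Neg_def)
    ultimately have "Box (Dia c) \<in> S" using mcs_Imp[OF L] mcs_L[OF L] S by blast
    then have "Dia c \<in> U2" using R2 by (auto simp: Rc_def)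
    then show False using nc mcs_Neg[OF L] U2 by (auto simp: Dia_def)
  qed
  then obtain X where X: "{a. Box a \<in> U1} \<union> {a. Box a \<in> U2} \<subseteq> X" "mcs L X" using lindenbaum by blast
  then show "\<exists>w\<in>{S. mcs L S}. Rc L U1 w \<and> Rc L U2 w" by (auto simp: Rc_def)
qed

lemma c_3: assumes "Or (Box (Imp (Box p) q)) (Box (Imp (Box q) p)) \<in> L" shows "connW {S. mcs L S} (Rc L)"
  unfolding connW_def
proof (intro ballI impI)
  fix S U1 U2 assume S: "S \<in> {S. mcs L S}" and U1: "U1 \<in> {S. mcs L S}" and U2: "U2 \<in> {S. mcs L S}"
    and R1: "Rc L S U1" and R2: "Rc L S U2"
  show "Rc L U1 U2 \<or> Rc L U2 U1"
  proof (rule ccontr)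
    assume "\<not> (Rc L U1 U2 \<or> Rc L U2 U1)"
    then obtain a b where a: "Box a \<in> U1" "a \<notin> U2" and b: "Box b \<in> U2" "b \<notin> U1"
      using U1 U2 by (auto simp: Rc_def)
    have "Or (Box (Imp (Box a) b)) (Box (Imp (Box b) a)) \<in> L"
      using inst1[OF L assms, of a b] by (simp add: s2_def Or_def Neg_def)
    then have "Or (Box (Imp (Box a) b)) (Box (Imp (Box b) a)) \<in> S" using mcs_L[OF L] S by auto
    then have "Box (Imp (Box a) b) \<in> S \<or> Box (Imp (Box b) a) \<in> S"
      using mcs_Imp[OF L] mcs_Neg[OF L] S by (auto simp: Or_def)
    then show False
    proof
      assume "Box (Imp (Box a) b) \<in> S"
      then have "Imp (Box a) b \<in> U1" using R1 by (auto simp: Rc_def)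
      then show False using mcs_Imp[OF L] U1 a b by auto
    next
      assume "Box (Imp (Box b) a) \<in> S"
      then have "Imp (Box b) a \<in> U2" using R2 by (auto simp: Rc_def)
      then show False using mcs_Imp[OF L] U2 a b by auto
    qed
  qed
qed

end

lemma T_sub_KTB: "T \<subseteq> KTB" unfolding KTB_def by (rule ext_sub)
lemma T_sub_S4: "T \<subseteq> S4" unfolding S4_def by (rule ext_sub)
lemma S4_sub_S5: "S4 \<subseteq> S5" unfolding S5_def by (rule ext_sub)
lemma S4_sub_S4_2: "S4 \<subseteq> S4_2" unfolding S4_2_def by (rule ext_sub)
lemma S4_sub_S4_3: "S4 \<subseteq> S4_3" unfolding S4_3_def by (rule ext_sub)
lemma axT: "Imp (Box p) p \<in> T" unfolding T_def by (rule ext_ax)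
lemma axB: "Imp p (Box (Dia p)) \<in> KTB" unfolding KTB_def by (rule ext_ax)
lemma axB5: "Imp p (Box (Dia p)) \<in> S5" unfolding S5_def by (rule ext_ax)
lemma ax4: "Imp (Box p) (Box (Box p)) \<in> S4" unfolding S4_def by (rule ext_ax)
lemma ax2: "Imp (Dia (Box p)) (Box (Dia p)) \<in> S4_2" unfolding S4_2_def by (rule ext_ax)
lemma ax3: "Or (Box (Imp (Box p) q)) (Box (Imp (Box q) p)) \<in> S4_3" unfolding S4_3_def by (rule ext_ax)

lemma nmlT: "nml T" unfolding T_def by (rule nml_ext)
lemma nmlKTB: "nml KTB" unfolding KTB_def by (rule nml_ext)
lemma nmlS4: "nml S4" unfolding S4_def by (rule nml_ext)
lemma nmlS5: "nml S5" unfolding S5_def by (rule nml_ext)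
lemma nmlS4_2: "nml S4_2" unfolding S4_2_def by (rule nml_ext)
lemma nmlS4_3: "nml S4_3" unfolding S4_3_def by (rule nml_ext)

lemma sb_T: "strong_boxdot T"
proof (rule general[OF nmlT, where P = "\<lambda>W R. reflW W R" and Q = "\<lambda>W R. reflW W R"])
  fix W :: "(fm set \<times> bool) set" and R assume "closed W R" "reflW W R"
  then show "T \<subseteq> {a. valid W R a}" by (rule sound_T)
qed (auto intro: c_T[OF nmlT axT] d_refl)

lemma sb_KTB: "strong_boxdot KTB"
proof (rule general[OF nmlKTB, where P = "\<lambda>W R. reflW W R \<and> symW W R" and Q = "\<lambda>W R. reflW W R \<and> symW W R"])
  fix W :: "(fm set \<times> bool) set" and R assume "closed W R" "reflW W R \<and> symW W R"
  then show "KTB \<subseteq> {a. valid W R a}" by (rule sound_KTB)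
next
  show "reflW {S. mcs KTB S} (Rc KTB) \<and> symW {S. mcs KTB S} (Rc KTB)"
    using c_T[OF nmlKTB] c_B[OF nmlKTB axB] T_sub_KTB axT by blast
qed (auto intro: d_refl d_sym)

lemma sb_S4: "strong_boxdot S4"
proof (rule general[OF nmlS4, where P = "\<lambda>W R. reflW W R \<and> transW W R" and Q = "\<lambda>W R. reflW W R \<and> transW W R"])
  fix W :: "(fm set \<times> bool) set" and R assume "closed W R" "reflW W R \<and> transW W R"
  then show "S4 \<subseteq> {a. valid W R a}" by (rule sound_S4)
next
  show "reflW {S. mcs S4 S} (Rc S4) \<and> transW {S. mcs S4 S} (Rc S4)"
    using c_T[OF nmlS4] c_4[OF nmlS4 ax4] T_sub_S4 axT by blast
qed (auto intro: d_refl d_trans)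

lemma sb_S5: "strong_boxdot S5"
proof (rule general[OF nmlS5, where P = "\<lambda>W R. reflW W R \<and> transW W R \<and> symW W R" and Q = "\<lambda>W R. reflW W R \<and> transW W R \<and> symW W R"])
  fix W :: "(fm set \<times> bool) set" and R assume "closed W R" "reflW W R \<and> transW W R \<and> symW W R"
  then show "S5 \<subseteq> {a. valid W R a}" by (rule sound_S5)
next
  show "reflW {S. mcs S5 S} (Rc S5) \<and> transW {S. mcs S5 S} (Rc S5) \<and> symW {S. mcs S5 S} (Rc S5)"
    using c_T[OF nmlS5] c_4[OF nmlS5] c_B[OF nmlS5 axB5] T_sub_S4 S4_sub_S5 axT ax4 by blast
qed (auto intro: d_refl d_trans d_sym)

lemma sb_S4_2: "strong_boxdot S4_2"
proof (rule general[OF nmlS4_2, where P = "\<lambda>W R. reflW W R \<and> transW W R \<and> conflW W R" and Q = "\<lambda>W R. reflW W R \<and> transW W R \<and> conflW W R"])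
  fix W :: "(fm set \<times> bool) set" and R assume "closed W R" "reflW W R \<and> transW W R \<and> conflW W R"
  then show "S4_2 \<subseteq> {a. valid W R a}" by (rule sound_S4_2)
next
  show "reflW {S. mcs S4_2 S} (Rc S4_2) \<and> transW {S. mcs S4_2 S} (Rc S4_2) \<and> conflW {S. mcs S4_2 S} (Rc S4_2)"
    using c_T[OF nmlS4_2] c_4[OF nmlS4_2] c_2[OF nmlS4_2 ax2] T_sub_S4 S4_sub_S4_2 axT ax4 by blast
qed (auto intro: d_refl d_trans d_confl)

lemma sb_S4_3: "strong_boxdot S4_3"
proof (rule general[OF nmlS4_3, where P = "\<lambda>W R. reflW W R \<and> transW W R \<and> connW W R" and Q = "\<lambda>W R. reflW W R \<and> transW W R \<and> connW W R"])
  fix W :: "(fm set \<times> bool) set" and R assume "closed W R" "reflW W R \<and> transW W R \<and> connW W R"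
  then show "S4_3 \<subseteq> {a. valid W R a}" by (rule sound_S4_3)
next
  show "reflW {S. mcs S4_3 S} (Rc S4_3) \<and> transW {S. mcs S4_3 S} (Rc S4_3) \<and> connW {S. mcs S4_3 S} (Rc S4_3)"
    using c_T[OF nmlS4_3] c_4[OF nmlS4_3] c_3[OF nmlS4_3 ax3] T_sub_S4 S4_sub_S4_3 axT ax4 by blast
qed (auto intro: d_refl d_trans d_conn)

theorem mainTheorem2:
  shows "(\<forall>L0 \<in> {T, KTB, S4, S5, S4_2, S4_3}. strong_boxdot L0)
         \<and> (\<forall>L. nml L \<longrightarrow> BD L = T \<longrightarrow> L \<subseteq> T)"
  using sb_T sb_KTB sb_S4 sb_S5 sb_S4_2 sb_S4_3 by (auto simp: strong_boxdot_def)

end
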